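(* Let $V$ be an $n$-dimensional vector space over a field $\mathbb{F}$, and let $k\leq n/2$. If $K$ and $L$ are nonzero subspaces of $\bigwedge^{k}V$ such that $x\wedge y=0$ for every $x\in K$ and $y\in L$, then \[ \dim K+\dim L\leq\binom{n}{k}-\binom{n-k}{k}+1. \]
   Context: $\bigwedge V$ denotes the exterior algebra of $V$ and $\bigwedge^{k}V$ its degree-$k$ component. Subspaces $K,L$ with $K\wedge L=0$ are called cross-annihilating. The paper assumes throughout, for expository purposes, that the characteristic of $\mathbb{F}$ is not $2$. *)

theory Defs
  imports Complex_Main "HOL-Library.Function_Algebras"
begin

text \<open>Concrete model of the exterior algebra of V = F^n with basis e_0,...,e_(n-1).
  An element of the exterior algebra is its coordinate function on the basis
  e_S = e_(s_1) wedge ... wedge e_(s_j) (s_1 < ... < s_j) indexed by finite sets S of indices.\<close>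

definition fscale :: "'a::field \<Rightarrow> ('b \<Rightarrow> 'a) \<Rightarrow> ('b \<Rightarrow> 'a)" where
  "fscale c f = (\<lambda>x. c * f x)"

lemma vector_space_fscale: "vector_space (fscale :: 'a::field \<Rightarrow> ('b \<Rightarrow> 'a) \<Rightarrow> _)"
  by (unfold_locales) (auto simp: fscale_def fun_eq_iff algebra_simps)

definition ext_power :: "nat \<Rightarrow> nat \<Rightarrow> (nat set \<Rightarrow> 'a::field) set" where
  "ext_power n k = {x. \<forall>S. x S \<noteq> 0 \<longrightarrow> S \<subseteq> {..<n} \<and> card S = k}"

text \<open>Sign of e_S wedge e_T = shuffle_sign S T * e_(S union T) for disjoint S, T.\<close>
definition shuffle_sign :: "nat set \<Rightarrow> nat set \<Rightarrow> 'a::field" where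
  "shuffle_sign S T = (-1) ^ card {(s, t). s \<in> S \<and> t \<in> T \<and> t < s}"

text \<open>Wedge product, extended bilinearly from e_S wedge e_T.\<close>
definition wedge :: "(nat set \<Rightarrow> 'a::field) \<Rightarrow> (nat set \<Rightarrow> 'a) \<Rightarrow> (nat set \<Rightarrow> 'a)" where
  "wedge x y = (\<lambda>U. \<Sum>S\<in>Pow U. shuffle_sign S (U - S) * x S * y (U - S))"

end

theory Submission
  imports Defs "HOL-Library.Nat_Bijection"
begin

definition ksets :: "nat \<Rightarrow> nat \<Rightarrow> nat set set" where
  "ksets n k = {S. S \<subseteq> {..<n} \<and> card S = k}"

definition crossi :: "nat set set \<Rightarrow> nat set set \<Rightarrow> bool" where
  "crossi A B = (\<forall>S\<in>A. \<forall>T\<in>B. S \<inter> T \<noteq> {})"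

definition sh :: "nat \<Rightarrow> nat \<Rightarrow> nat set \<Rightarrow> nat set" where
  "sh x y S = (if y \<in> S \<and> x \<notin> S then insert x (S - {y}) else S)"

definition shiftF :: "nat \<Rightarrow> nat \<Rightarrow> nat set set \<Rightarrow> nat set set" where
  "shiftF x y F = {S \<in> F. sh x y S \<in> F} \<union> sh x y ` {S \<in> F. sh x y S \<notin> F}"

lemma finite_ksets: "finite (ksets n k)"
  by (rule finite_subset[of _ "Pow {..<n}"]) (auto simp: ksets_def)

lemma sh_inj: "inj_on (sh x y) {S. sh x y S \<noteq> S}"
proof (rule inj_onI)
  fix S T assume S: "S \<in> {S. sh x y S \<noteq> S}" and T: "T \<in> {S. sh x y S \<noteq> S}"
    and e: "sh x y S = sh x y T"
  from S have S': "y \<in> S" "x \<notin> S" by (auto simp: sh_def split: if_splits)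
  from T have T': "y \<in> T" "x \<notin> T" by (auto simp: sh_def split: if_splits)
  from e S' T' have "insert x (S - {y}) = insert x (T - {y})" by (simp add: sh_def)
  then have "insert x (S - {y}) - {x} = insert x (T - {y}) - {x}" by simp
  moreover have "insert x (S - {y}) - {x} = S - {y}" using S' by auto
  moreover have "insert x (T - {y}) - {x} = T - {y}" using T' by auto
  ultimately have "S - {y} = T - {y}" by simp
  then show "S = T" using S' T' by blast
qed

lemma card_shiftF:
  assumes "finite F"
  shows "card (shiftF x y F) = card F"
proof -
  let ?P = "{S \<in> F. sh x y S \<in> F}" and ?Q = "{S \<in> F. sh x y S \<notin> F}"
  have inj: "inj_on (sh x y) ?Q"
    by (rule inj_on_subset[OF sh_inj]) auto
  have d: "?P \<inter> sh x y ` ?Q = {}" by auto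
  have "card (shiftF x y F) = card ?P + card (sh x y ` ?Q)"
    unfolding shiftF_def using assms d by (intro card_Un_disjoint) auto
  also have "card (sh x y ` ?Q) = card ?Q" using inj by (rule card_image)
  also have "card ?P + card ?Q = card F"
    using assms by (subst card_Un_disjoint[symmetric]) (auto intro: arg_cong[where f=card])
  finally show ?thesis .
qed

lemma sh_ksets: "S \<in> ksets n k \<Longrightarrow> x < n \<Longrightarrow> sh x y S \<in> ksets n k"
proof -
  assume S: "S \<in> ksets n k" and x: "x < n"
  show ?thesis
  proof (cases "y \<in> S \<and> x \<notin> S")
    case True
    have fin: "finite S" using S by (auto simp: ksets_def intro: finite_subset)
    have "card S > 0" using True fin card_gt_0_iff by blast
    then have "card (insert x (S - {y})) = card S"
      using True fin by simp
    then show ?thesis using S x True by (auto simp: ksets_def sh_def)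
  next
    case False then show ?thesis using S by (auto simp: sh_def)
  qed
qed

lemma shiftF_ksets: "F \<subseteq> ksets n k \<Longrightarrow> x < n \<Longrightarrow> shiftF x y F \<subseteq> ksets n k"
  unfolding shiftF_def using sh_ksets by blast

lemma crossi_shiftF:
  assumes c: "crossi A B" and xy: "x \<noteq> y"
  shows "crossi (shiftF x y A) (shiftF x y B)"
  unfolding crossi_def
proof (intro ballI)
  fix S' T' assume S': "S' \<in> shiftF x y A" and T': "T' \<in> shiftF x y B"
  show "S' \<inter> T' \<noteq> {}"
  proof (cases "S' \<in> A \<and> sh x y S' \<in> A")
    case SA: True
    show ?thesis
    proof (cases "T' \<in> B \<and> sh x y T' \<in> B")
      case True
      then show ?thesis using SA c by (auto simp: crossi_def)
    next
      case False
      then obtain T where T: "T \<in> B" "sh x y T \<notin> B" "T' = sh x y T"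
        using T' by (auto simp: shiftF_def)
      then have T2: "y \<in> T" "x \<notin> T" "T' = insert x (T - {y})"
        by (auto simp: sh_def split: if_splits)
      show ?thesis
      proof
        assume e: "S' \<inter> T' = {}"
        have "S' \<inter> T \<noteq> {}" using c SA T by (auto simp: crossi_def)
        then have "y \<in> S'" using e T2 by blast
        moreover have "x \<notin> S'" using e T2 by blast
        ultimately have "sh x y S' = insert x (S' - {y})" by (simp add: sh_def)
        moreover have "sh x y S' \<inter> T \<noteq> {}" using c SA T by (auto simp: crossi_def)
        ultimately obtain z where z: "z \<in> insert x (S' - {y})" "z \<in> T" by auto
        show False
        proof (cases "z = x")
          case True then show False using z T2 by simp
        next
          case False
          then have "z \<in> S'" "z \<noteq> y" using z by auto
          then have "z \<in> T'" using z T2 by simp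
          then show False using e \<open>z \<in> S'\<close> by auto
        qed
      qed
    qed
  next
    case False
    then obtain S where S: "S \<in> A" "sh x y S \<notin> A" "S' = sh x y S"
      using S' by (auto simp: shiftF_def)
    then have S2: "y \<in> S" "x \<notin> S" "S' = insert x (S - {y})"
      by (auto simp: sh_def split: if_splits)
    show ?thesis
    proof (cases "T' \<in> B \<and> sh x y T' \<in> B")
      case TB: True
      show ?thesis
      proof
        assume e: "S' \<inter> T' = {}"
        have "S \<inter> T' \<noteq> {}" using c TB S by (auto simp: crossi_def)
        then have "y \<in> T'" using e S2 by blast
        moreover have "x \<notin> T'" using e S2 by blast
        ultimately have "sh x y T' = insert x (T' - {y})" by (simp add: sh_def)
        moreover have "S \<inter> sh x y T' \<noteq> {}" using c TB S by (auto simp: crossi_def)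
        ultimately obtain z where z: "z \<in> insert x (T' - {y})" "z \<in> S" by auto
        show False
        proof (cases "z = x")
          case True then show False using z S2 by simp
        next
          case False
          then have "z \<in> T'" "z \<noteq> y" using z by auto
          then have "z \<in> S'" using z S2 by simp
          then show False using e \<open>z \<in> T'\<close> by auto
        qed
      qed
    next
      case False
      then obtain T where T: "T \<in> B" "sh x y T \<notin> B" "T' = sh x y T"
        using T' by (auto simp: shiftF_def)
      then have "x \<in> T'" by (auto simp: sh_def split: if_splits)
      moreover have "x \<in> S'" using S2 by auto
      ultimately show ?thesis by blast
    qed
  qed
qed

lemma measure_shiftF:
  assumes fin: "finite F" and xy: "x \<noteq> y"
  shows "card {S \<in> shiftF x y F. y \<in> S} \<le> card {S \<in> F. y \<in> S}"
    and "(\<exists>S\<in>F. sh x y S \<notin> F) \<Longrightarrow> card {S \<in> shiftF x y F. y \<in> S} < card {S \<in> F. y \<in> S}"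
proof -
  have sub: "{S \<in> shiftF x y F. y \<in> S} \<subseteq> {S \<in> F. y \<in> S}"
    unfolding shiftF_def using xy by (auto simp: sh_def split: if_splits)
  have fin2: "finite {S \<in> F. y \<in> S}" using fin by auto
  show "card {S \<in> shiftF x y F. y \<in> S} \<le> card {S \<in> F. y \<in> S}"
    using card_mono[OF fin2 sub] .
  assume "\<exists>S\<in>F. sh x y S \<notin> F"
  then obtain S where S: "S \<in> F" "sh x y S \<notin> F" by blast
  then have yS: "y \<in> S" by (auto simp: sh_def split: if_splits)
  have "S \<notin> shiftF x y F"
    unfolding shiftF_def using S yS by (auto simp: sh_def split: if_splits)
  then have "{S \<in> shiftF x y F. y \<in> S} \<subset> {S \<in> F. y \<in> S}" using sub S yS by blast
  then show "card {S \<in> shiftF x y F. y \<in> S} < card {S \<in> F. y \<in> S}"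
    using psubset_card_mono[OF fin2] by blast
qed


lemma normalize:
  assumes A: "A \<subseteq> ksets (Suc m) k" and B: "B \<subseteq> ksets (Suc m) k" and c: "crossi A B"
  obtains A' B' where "A' \<subseteq> ksets (Suc m) k" "B' \<subseteq> ksets (Suc m) k" "crossi A' B'"
    "card A' = card A" "card B' = card B"
    "\<forall>x<m. \<forall>S\<in>A'. sh x m S \<in> A'" "\<forall>x<m. \<forall>T\<in>B'. sh x m T \<in> B'"
proof -
  define P where "P = (\<lambda>p. fst p \<subseteq> ksets (Suc m) k \<and> snd p \<subseteq> ksets (Suc m) k
      \<and> crossi (fst p) (snd p) \<and> card (fst p) = card A \<and> card (snd p) = card B)"
  define mu where "mu = (\<lambda>p. card {S \<in> fst p. m \<in> S} + card {S \<in> snd p. m \<in> S})"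
  have "P (A, B)" using assms by (simp add: P_def)
  then obtain p where Pp: "P p" and min: "\<And>q. P q \<Longrightarrow> mu p \<le> mu q"
    using ex_has_least_nat[of P "(A, B)" mu] by blast
  obtain A' B' where p: "p = (A', B')" by (cases p)
  have A': "A' \<subseteq> ksets (Suc m) k" and B': "B' \<subseteq> ksets (Suc m) k" and c': "crossi A' B'"
    and cA: "card A' = card A" and cB: "card B' = card B"
    using Pp by (auto simp: P_def p)
  have finA: "finite A'" and finB: "finite B'"
    using A' B' finite_ksets finite_subset by blast+
  have stab: False if x: "x < m" and ns: "(\<exists>S\<in>A'. sh x m S \<notin> A') \<or> (\<exists>S\<in>B'. sh x m S \<notin> B')" for x
  proof -
    let ?q = "(shiftF x m A', shiftF x m B')"
    have xm: "x \<noteq> m" using x by simp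
    have "P ?q"
    proof -
      have "shiftF x m A' \<subseteq> ksets (Suc m) k" using A' x by (intro shiftF_ksets) auto
      moreover have "shiftF x m B' \<subseteq> ksets (Suc m) k" using B' x by (intro shiftF_ksets) auto
      ultimately show ?thesis
        unfolding P_def using c' cA cB xm finA finB
        by (auto intro!: crossi_shiftF simp: card_shiftF)
    qed
    then have le: "mu p \<le> mu ?q" by (rule min)
    have m1: "card {S \<in> shiftF x m A'. m \<in> S} \<le> card {S \<in> A'. m \<in> S}"
      and m2: "card {S \<in> shiftF x m B'. m \<in> S} \<le> card {S \<in> B'. m \<in> S}"
      using measure_shiftF(1)[OF finA xm] measure_shiftF(1)[OF finB xm] by auto
    have "mu ?q < mu p"
    proof (cases "\<exists>S\<in>A'. sh x m S \<notin> A'")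
      case True
      then have "card {S \<in> shiftF x m A'. m \<in> S} < card {S \<in> A'. m \<in> S}"
        using measure_shiftF(2)[OF finA xm] by blast
      then show ?thesis using m2 by (simp add: mu_def p)
    next
      case False
      then have "\<exists>S\<in>B'. sh x m S \<notin> B'" using ns by blast
      then have "card {S \<in> shiftF x m B'. m \<in> S} < card {S \<in> B'. m \<in> S}"
        using measure_shiftF(2)[OF finB xm] by blast
      then show ?thesis using m1 by (simp add: mu_def p)
    qed
    then show False using le by simp
  qed
  show ?thesis
    apply (rule that[OF A' B' c' cA cB])
    using stab by blast+
qed

lemma card_ksets: "card (ksets n k) = n choose k"
  unfolding ksets_def using n_subsets[of "{..<n}" k] by simp

lemma crossi_k0: "A \<subseteq> ksets n 0 \<Longrightarrow> A \<noteq> {} \<Longrightarrow> B \<noteq> {} \<Longrightarrow> crossi A B \<Longrightarrow> False"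
proof -
  assume A: "A \<subseteq> ksets n 0" "A \<noteq> {}" "B \<noteq> {}" "crossi A B"
  then obtain S T where "S \<in> A" "T \<in> B" by blast
  moreover have "S = {}"
  proof -
    have "S \<subseteq> {..<n}" "card S = 0" using A `S \<in> A` by (auto simp: ksets_def)
    then show ?thesis using finite_subset[of S "{..<n}"] by simp
  qed
  ultimately show False using A by (auto simp: crossi_def)
qed

lemma arith1:
  fixes a b c m j :: nat
  assumes "a \<le> (m choose Suc j) - ((m - Suc j) choose Suc j) + 1"
    and "c \<le> (m choose j) - ((m - Suc j) choose j)"
    and "2 * Suc j \<le> m"
  shows "a + c \<le> (Suc m choose Suc j) - ((Suc m - Suc j) choose Suc j) + 1"
proof -
  have e: "Suc m - Suc j = Suc (m - Suc j)" using assms(3) by simp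
  have l1: "(m - Suc j) choose Suc j \<le> m choose Suc j" by (rule binomial_right_mono) simp
  have l2: "(m - Suc j) choose j \<le> m choose j" by (rule binomial_right_mono) simp
  show ?thesis using assms(1,2) l1 l2 unfolding e binomial_Suc_Suc by linarith
qed

lemma arith2:
  fixes a c m i :: nat
  assumes "a \<le> (m choose Suc (Suc i)) - ((m - Suc (Suc i)) choose Suc (Suc i)) + 1"
    and "c \<le> (m choose Suc i) - ((m - Suc i) choose Suc i) + 1"
    and "2 * Suc (Suc i) \<le> m"
  shows "a + c \<le> (Suc m choose Suc (Suc i)) - ((Suc m - Suc (Suc i)) choose Suc (Suc i)) + 1"
proof -
  have e: "Suc m - Suc (Suc i) = Suc (m - Suc (Suc i))" using assms(3) by simp
  have e2: "m - Suc i = Suc (m - Suc (Suc i))" using assms(3) by simp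
  have l1: "(m - Suc (Suc i)) choose Suc (Suc i) \<le> m choose Suc (Suc i)" by (rule binomial_right_mono) simp
  have l2: "(Suc (m - Suc (Suc i))) choose Suc i \<le> m choose Suc i" using assms(3) by (intro binomial_right_mono) simp
  have l3: "(m - Suc (Suc i)) choose i > 0" using assms(3) by (intro zero_less_binomial) simp
  show ?thesis using assms(1,2) l1 l2 l3 unfolding e e2 binomial_Suc_Suc by linarith
qed

lemma card_meeting:
  assumes S0: "S0 \<in> ksets m k"
  shows "card {T \<in> ksets m j. T \<inter> S0 \<noteq> {}} = (m choose j) - ((m - k) choose j)"
proof -
  have fin: "finite ({..<m} - S0)" by simp
  have cS: "card ({..<m} - S0) = m - k"
  proof -
    have "S0 \<subseteq> {..<m}" "card S0 = k" using S0 by (auto simp: ksets_def)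
    then show ?thesis using card_Diff_subset[of S0 "{..<m}"] finite_subset[of S0 "{..<m}"] by simp
  qed
  have u: "ksets m j = {T \<in> ksets m j. T \<inter> S0 \<noteq> {}} \<union> {T. T \<subseteq> {..<m} - S0 \<and> card T = j}"
    by (auto simp: ksets_def)
  have d: "{T \<in> ksets m j. T \<inter> S0 \<noteq> {}} \<inter> {T. T \<subseteq> {..<m} - S0 \<and> card T = j} = {}" by blast
  have "m choose j = card {T \<in> ksets m j. T \<inter> S0 \<noteq> {}} + card {T. T \<subseteq> {..<m} - S0 \<and> card T = j}"
    using card_Un_disjoint[OF _ _ d] finite_ksets u card_ksets
    by (metis (no_types, lifting) finite_Un)
  also have "card {T. T \<subseteq> {..<m} - S0 \<and> card T = j} = (m - k) choose j"
    using n_subsets[OF fin] cS by simp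
  finally show ?thesis by simp
qed


lemma ex_notin:
  assumes "S \<subseteq> {..<m}" "card S < m"
  shows "\<exists>x<m. x \<notin> S"
proof (rule ccontr)
  assume "\<not> ?thesis"
  then have "{..<m} \<subseteq> S" by auto
  then have "S = {..<m}" using assms(1) by blast
  then show False using assms(2) by simp
qed

lemma HM:
  "A \<subseteq> ksets n k \<Longrightarrow> B \<subseteq> ksets n k \<Longrightarrow> A \<noteq> {} \<Longrightarrow> B \<noteq> {} \<Longrightarrow> crossi A B
   \<Longrightarrow> 2 * k \<le> n \<Longrightarrow> card A + card B \<le> (n choose k) - ((n - k) choose k) + 1"
proof (induction n arbitrary: k A B)
  case 0
  then have "k = 0" by simp
  then show ?case using crossi_k0 0 by blast
next
  case (Suc m)
  note A = Suc.prems(1) and B = Suc.prems(2) and Ane = Suc.prems(3) and Bne = Suc.prems(4)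
    and c = Suc.prems(5) and kn = Suc.prems(6)
  show ?case
  proof (cases "k = 0")
    case True then show ?thesis using crossi_k0 Suc.prems by blast
  next
    case k0: False
    show ?thesis
    proof (cases "2 * k = Suc m")
      case True
      let ?c = "\<lambda>S. {..<Suc m} - S"
      have inj: "inj_on ?c A"
      proof (rule inj_onI)
        fix S T assume "S \<in> A" "T \<in> A" "?c S = ?c T"
        moreover have "S \<subseteq> {..<Suc m}" "T \<subseteq> {..<Suc m}"
          using A \<open>S \<in> A\<close> \<open>T \<in> A\<close> by (auto simp: ksets_def)
        ultimately show "S = T" by blast
      qed
      have sub: "?c ` A \<subseteq> ksets (Suc m) k"
      proof
        fix U assume "U \<in> ?c ` A"
        then obtain S where S: "S \<in> A" "U = ?c S" by blast
        have "S \<subseteq> {..<Suc m}" "card S = k" using A S by (auto simp: ksets_def)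
        then have "card U = Suc m - k"
          using S card_Diff_subset[of S "{..<Suc m}"] finite_subset[of S "{..<Suc m}"] by simp
        then show "U \<in> ksets (Suc m) k" using True S by (auto simp: ksets_def)
      qed
      have disj: "?c ` A \<inter> B = {}"
      proof (rule ccontr)
        assume "?c ` A \<inter> B \<noteq> {}"
        then obtain S where "S \<in> A" "?c S \<in> B" by blast
        then have "S \<inter> ?c S \<noteq> {}" using c by (auto simp: crossi_def)
        then show False by blast
      qed
      have finB: "finite B" using B finite_ksets finite_subset by blast
      have finA: "finite A" using A finite_ksets finite_subset by blast
      have "card A + card B = card (?c ` A) + card B" using card_image[OF inj] by simp
      also have "\<dots> = card (?c ` A \<union> B)" using disj finA finB by (simp add: card_Un_disjoint)
      also have "\<dots> \<le> card (ksets (Suc m) k)"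
        using sub B by (intro card_mono[OF finite_ksets]) auto
      also have "\<dots> = Suc m choose k" by (rule card_ksets)
      finally have le: "card A + card B \<le> Suc m choose k" .
      have "Suc m - k = k" using True by simp
      then show ?thesis using le by simp
    next
      case False
      then have mk: "2 * k \<le> m" using kn by simp
      obtain A' B' where A': "A' \<subseteq> ksets (Suc m) k" and B': "B' \<subseteq> ksets (Suc m) k"
        and c': "crossi A' B'" and cA: "card A' = card A" and cB: "card B' = card B"
        and stA: "\<forall>x<m. \<forall>S\<in>A'. sh x m S \<in> A'" and stB: "\<forall>x<m. \<forall>T\<in>B'. sh x m T \<in> B'"
        using normalize[OF A B c] by blast
      have finA': "finite A'" and finB': "finite B'"
        using A' B' finite_ksets finite_subset by blast+
      have finA: "finite A" and finB: "finite B"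
        using A B finite_ksets finite_subset by blast+
      have A'ne: "A' \<noteq> {}" using cA Ane finA by auto
      have B'ne: "B' \<noteq> {}" using cB Bne finB by auto
      define A0 where "A0 = {S \<in> A'. m \<notin> S}"
      define A1 where "A1 = (\<lambda>S. S - {m}) ` {S \<in> A'. m \<in> S}"
      define B0 where "B0 = {S \<in> B'. m \<notin> S}"
      define B1 where "B1 = (\<lambda>S. S - {m}) ` {S \<in> B'. m \<in> S}"
      have injm: "inj_on (\<lambda>S. S - {m}) {S. m \<in> S}"
      proof (rule inj_onI)
        fix S T assume "S \<in> {S. m \<in> S}" "T \<in> {S. m \<in> S}" "S - {m} = T - {m}"
        then show "S = T" by blast
      qed
      have split: "card F = card {S \<in> F. m \<notin> S} + card ((\<lambda>S. S - {m}) ` {S \<in> F. m \<in> S})"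
        if "finite F" for F :: "nat set set"
      proof -
        have "card ((\<lambda>S. S - {m}) ` {S \<in> F. m \<in> S}) = card {S \<in> F. m \<in> S}"
          by (rule card_image, rule inj_on_subset[OF injm]) auto
        moreover have "card F = card {S \<in> F. m \<notin> S} + card {S \<in> F. m \<in> S}"
          using that by (subst card_Un_disjoint[symmetric]) (auto intro: arg_cong[where f=card])
        ultimately show ?thesis by simp
      qed
      have cardA: "card A = card A0 + card A1"
        using split[OF finA'] cA by (simp add: A0_def A1_def)
      have cardB: "card B = card B0 + card B1"
        using split[OF finB'] cB by (simp add: B0_def B1_def)
      have sub0: "{S \<in> F. m \<notin> S} \<subseteq> ksets m k" if "F \<subseteq> ksets (Suc m) k" for F
      proof
        fix S assume "S \<in> {S \<in> F. m \<notin> S}"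
        then have "S \<subseteq> {..<Suc m}" "card S = k" "m \<notin> S" using that by (auto simp: ksets_def)
        moreover have "S \<subseteq> {..<m}"
        proof
          fix z assume "z \<in> S"
          then have "z < Suc m" "z \<noteq> m" using calculation by auto
          then show "z \<in> {..<m}" by simp
        qed
        ultimately show "S \<in> ksets m k" by (simp add: ksets_def)
      qed
      have sub1: "(\<lambda>S. S - {m}) ` {S \<in> F. m \<in> S} \<subseteq> ksets m (k - 1)" if "F \<subseteq> ksets (Suc m) k" for F
      proof
        fix U assume "U \<in> (\<lambda>S. S - {m}) ` {S \<in> F. m \<in> S}"
        then obtain S where S: "S \<in> F" "m \<in> S" "U = S - {m}" by blast
        have "S \<subseteq> {..<Suc m}" "card S = k" using that S by (auto simp: ksets_def)
        then have "finite S" using finite_subset by blast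
        then have "card U = k - 1" using S \<open>card S = k\<close> by simp
        moreover have "U \<subseteq> {..<m}" using S \<open>S \<subseteq> {..<Suc m}\<close> by (auto simp: less_Suc_eq)
        ultimately show "U \<in> ksets m (k - 1)" by (simp add: ksets_def)
      qed
      have A0k: "A0 \<subseteq> ksets m k" using sub0[OF A'] by (simp add: A0_def)
      have B0k: "B0 \<subseteq> ksets m k" using sub0[OF B'] by (simp add: B0_def)
      have A1k: "A1 \<subseteq> ksets m (k - 1)" using sub1[OF A'] by (simp add: A1_def)
      have B1k: "B1 \<subseteq> ksets m (k - 1)" using sub1[OF B'] by (simp add: B1_def)
      have ne0: "{S \<in> F. m \<notin> S} \<noteq> {}"
        if F: "F \<subseteq> ksets (Suc m) k" "F \<noteq> {}" "\<forall>x<m. \<forall>S\<in>F. sh x m S \<in> F" for F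
      proof -
        obtain S where S: "S \<in> F" using F by blast
        show ?thesis
        proof (cases "m \<in> S")
          case False then show ?thesis using S by blast
        next
          case True
          have "S \<subseteq> {..<Suc m}" "card S = k" using F S by (auto simp: ksets_def)
          then have fS: "finite S" using finite_subset by blast
          have "S - {m} \<subseteq> {..<m}" using \<open>S \<subseteq> {..<Suc m}\<close> by (auto simp: less_Suc_eq)
          moreover have "card (S - {m}) < m" using fS True \<open>card S = k\<close> mk k0 by simp
          ultimately obtain x where x: "x < m" "x \<notin> S - {m}" using ex_notin by blast
          then have "x \<notin> S" by auto
          then have "sh x m S = insert x (S - {m})" using True by (simp add: sh_def)
          moreover have "sh x m S \<in> F" using F(3) x S by blast
          ultimately show ?thesis using x by auto
        qed
      qed
      have A0ne: "A0 \<noteq> {}" using ne0[OF A' A'ne stA] by (simp add: A0_def)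
      have B0ne: "B0 \<noteq> {}" using ne0[OF B' B'ne stB] by (simp add: B0_def)
      have c0: "crossi A0 B0" using c' by (auto simp: crossi_def A0_def B0_def)
      have c1: "crossi A1 B1"
        unfolding crossi_def
      proof (intro ballI)
        fix S1 T1 assume "S1 \<in> A1" "T1 \<in> B1"
        then obtain S T where S: "S \<in> A'" "m \<in> S" "S1 = S - {m}"
          and T: "T \<in> B'" "m \<in> T" "T1 = T - {m}" by (auto simp: A1_def B1_def)
        show "S1 \<inter> T1 \<noteq> {}"
        proof
          assume e: "S1 \<inter> T1 = {}"
          have "S1 \<in> ksets m (k - 1)" "T1 \<in> ksets m (k - 1)"
            using A1k B1k \<open>S1 \<in> A1\<close> \<open>T1 \<in> B1\<close> by auto
          then have s1: "S1 \<subseteq> {..<m}" "card S1 = k - 1" "T1 \<subseteq> {..<m}" "card T1 = k - 1"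
            by (auto simp: ksets_def)
          have "card (S1 \<union> T1) \<le> card S1 + card T1" by (rule card_Un_le)
          then have "card (S1 \<union> T1) < m" using s1 mk k0 by simp
          moreover have "S1 \<union> T1 \<subseteq> {..<m}" using s1 by auto
          ultimately obtain x where x: "x < m" "x \<notin> S1 \<union> T1" using ex_notin by blast
          have "x \<notin> T" using x T by auto
          then have "sh x m T = insert x T1" using T by (simp add: sh_def)
          moreover have "sh x m T \<in> B'" using stB x T by blast
          ultimately have "insert x T1 \<in> B'" by simp
          then have "S \<inter> insert x T1 \<noteq> {}" using c' S(1) unfolding crossi_def by blast
          then obtain z where z: "z \<in> S" "z \<in> insert x T1" by blast
          show False
          proof (cases "z = x")
            case True then show False using z x S by auto
          next
            case False
            then have "z \<in> T1" using z by auto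
            then have "z \<noteq> m" using T by auto
            then have "z \<in> S1" using z S by auto
            then show False using e \<open>z \<in> T1\<close> by auto
          qed
        qed
      qed
      have IH0: "card A0 + card B0 \<le> (m choose k) - ((m - k) choose k) + 1"
        using Suc.IH[OF A0k B0k A0ne B0ne c0 mk] .
      obtain j where kj: "k = Suc j" using k0 by (cases k) auto
      show ?thesis
      proof (cases "A1 = {}")
        case True
        obtain S0 where S0: "S0 \<in> A0" using A0ne by blast
        have "B1 \<subseteq> {T \<in> ksets m (k - 1). T \<inter> S0 \<noteq> {}}"
        proof
          fix T1 assume "T1 \<in> B1"
          then obtain T where T: "T \<in> B'" "m \<in> T" "T1 = T - {m}" by (auto simp: B1_def)
          have "S0 \<inter> T \<noteq> {}" using c' S0 T by (auto simp: crossi_def A0_def)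
          then have "T1 \<inter> S0 \<noteq> {}" using S0 T by (auto simp: A0_def)
          then show "T1 \<in> {T \<in> ksets m (k - 1). T \<inter> S0 \<noteq> {}}" using B1k \<open>T1 \<in> B1\<close> by auto
        qed
        then have "card B1 \<le> card {T \<in> ksets m (k - 1). T \<inter> S0 \<noteq> {}}"
          by (intro card_mono) (auto intro: finite_subset[OF _ finite_ksets])
        also have "\<dots> = (m choose (k - 1)) - ((m - k) choose (k - 1))"
          using S0 A0k by (intro card_meeting) auto
        finally have cB1: "card B1 \<le> (m choose j) - ((m - Suc j) choose j)" using kj by simp
        have "card A + card B = (card A0 + card B0) + card B1" using cardA cardB True by simp
        also have "\<dots> \<le> (Suc m choose Suc j) - ((Suc m - Suc j) choose Suc j) + 1"
          using arith1[OF _ cB1] IH0 mk kj by simp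
        finally show ?thesis using kj by simp
      next
        case A1ne: False
        show ?thesis
        proof (cases "B1 = {}")
          case True
          obtain T0 where T0: "T0 \<in> B0" using B0ne by blast
          have "A1 \<subseteq> {T \<in> ksets m (k - 1). T \<inter> T0 \<noteq> {}}"
          proof
            fix S1 assume "S1 \<in> A1"
            then obtain S where S: "S \<in> A'" "m \<in> S" "S1 = S - {m}" by (auto simp: A1_def)
            have "S \<inter> T0 \<noteq> {}" using c' T0 S by (auto simp: crossi_def B0_def)
            then have "S1 \<inter> T0 \<noteq> {}" using T0 S by (auto simp: B0_def)
            then show "S1 \<in> {T \<in> ksets m (k - 1). T \<inter> T0 \<noteq> {}}" using A1k \<open>S1 \<in> A1\<close> by auto
          qed
          then have "card A1 \<le> card {T \<in> ksets m (k - 1). T \<inter> T0 \<noteq> {}}"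
            by (intro card_mono) (auto intro: finite_subset[OF _ finite_ksets])
          also have "\<dots> = (m choose (k - 1)) - ((m - k) choose (k - 1))"
            using T0 B0k by (intro card_meeting) auto
          finally have cA1: "card A1 \<le> (m choose j) - ((m - Suc j) choose j)" using kj by simp
          have "card A + card B = (card A0 + card B0) + card A1" using cardA cardB True by simp
          also have "\<dots> \<le> (Suc m choose Suc j) - ((Suc m - Suc j) choose Suc j) + 1"
            using arith1[OF _ cA1] IH0 mk kj by simp
          finally show ?thesis using kj by simp
        next
          case B1ne: False
          show ?thesis
          proof (cases j)
            case 0
            then have "A1 \<subseteq> ksets m 0" using A1k kj by simp
            then show ?thesis using crossi_k0[OF _ A1ne B1ne c1] by blast
          next
            case (Suc i)
            have mk1: "2 * (k - 1) \<le> m" using mk by simp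
            have IH1: "card A1 + card B1 \<le> (m choose (k - 1)) - ((m - (k - 1)) choose (k - 1)) + 1"
              using Suc.IH[OF A1k B1k A1ne B1ne c1 mk1] .
            have "card A + card B = (card A0 + card B0) + (card A1 + card B1)" using cardA cardB by simp
            also have "\<dots> \<le> (Suc m choose Suc (Suc i)) - ((Suc m - Suc (Suc i)) choose Suc (Suc i)) + 1"
              using arith2[OF _ _] IH0 IH1 mk kj Suc by simp
            finally show ?thesis using kj Suc by simp
          qed
        qed
      qed
    qed
  qed
qed


definition lead :: "(nat set \<Rightarrow> 'a::field) \<Rightarrow> nat set" where
  "lead x = set_decode (Max (set_encode ` {S. x S \<noteq> 0}))"

lemma lead_props:
  assumes x: "x \<in> ext_power n k" and x0: "x \<noteq> 0"
  shows "x (lead x) \<noteq> 0" "lead x \<subseteq> {..<n}" "card (lead x) = k"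
    "\<And>S. x S \<noteq> 0 \<Longrightarrow> set_encode S \<le> set_encode (lead x)"
proof -
  let ?supp = "{S. x S \<noteq> 0}"
  have sub: "?supp \<subseteq> Pow {..<n}" using x by (auto simp: ext_power_def)
  then have fin: "finite ?supp" using finite_subset by blast
  have ne: "?supp \<noteq> {}" using x0 by auto
  have "Max (set_encode ` ?supp) \<in> set_encode ` ?supp"
    using fin ne by (intro Max_in) auto
  then obtain S0 where S0: "x S0 \<noteq> 0" "set_encode S0 = Max (set_encode ` ?supp)" by auto
  have fS0: "finite S0" using S0 sub finite_subset by blast
  have l: "lead x = S0" unfolding lead_def using S0(2)[symmetric] fS0 by simp
  show "x (lead x) \<noteq> 0" using l S0 by simp
  show "lead x \<subseteq> {..<n}" "card (lead x) = k" using l S0 x by (auto simp: ext_power_def)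
  show "\<And>S. x S \<noteq> 0 \<Longrightarrow> set_encode S \<le> set_encode (lead x)"
    using l S0 fin by (auto intro: Max_ge)
qed

lemma enc_union: "finite S \<Longrightarrow> finite T \<Longrightarrow> S \<inter> T = {} \<Longrightarrow>
  set_encode (S \<union> T) = set_encode S + set_encode T"
  unfolding set_encode_def by (rule sum.union_disjoint)

lemma wedge_lead:
  assumes x: "x \<in> ext_power n k" and y: "y \<in> ext_power n k'" and x0: "x \<noteq> 0" and y0: "y \<noteq> 0"
    and d: "lead x \<inter> lead y = {}"
  shows "wedge x y \<noteq> 0"
proof -
  define S0 where "S0 = lead x"
  define T0 where "T0 = lead y"
  define U where "U = S0 \<union> T0"
  have fS0: "finite S0" using lead_props(2)[OF x x0] finite_subset unfolding S0_def by blast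
  have fT0: "finite T0" using lead_props(2)[OF y y0] finite_subset unfolding T0_def by blast
  have fU: "finite U" using fS0 fT0 by (simp add: U_def)
  define f where "f = (\<lambda>S. shuffle_sign S (U - S) * x S * y (U - S))"
  have z: "f S = 0" if S: "S \<in> Pow U - {S0}" for S
  proof (rule ccontr)
    assume "f S \<noteq> 0"
    then have xs: "x S \<noteq> 0" and ys: "y (U - S) \<noteq> 0" by (auto simp: f_def)
    have e1: "set_encode S \<le> set_encode S0" using lead_props(4)[OF x x0 xs] by (simp add: S0_def)
    have e2: "set_encode (U - S) \<le> set_encode T0" using lead_props(4)[OF y y0 ys] by (simp add: T0_def)
    have fS: "finite S" using S fU finite_subset by blast
    have "set_encode U = set_encode S + set_encode (U - S)"
    proof -
      have "U = S \<union> (U - S)" using S by blast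
      then show ?thesis using enc_union[of S "U - S"] fS fU by (metis Diff_disjoint finite_Diff)
    qed
    moreover have "set_encode U = set_encode S0 + set_encode T0"
      unfolding U_def using enc_union fS0 fT0 d by (simp add: S0_def T0_def)
    ultimately have "set_encode S = set_encode S0" using e1 e2 by linarith
    then have "S = S0" using set_encode_eq fS fS0 by blast
    then show False using S by simp
  qed
  have S0U: "S0 \<in> Pow U" by (simp add: U_def)
  have "wedge x y U = (\<Sum>S\<in>Pow U. f S)" by (simp add: wedge_def f_def)
  also have "\<dots> = f S0 + (\<Sum>S\<in>Pow U - {S0}. f S)"
    using S0U fU by (simp add: sum.remove)
  also have "(\<Sum>S\<in>Pow U - {S0}. f S) = 0" using z by simp
  also have "U - S0 = T0" using d by (auto simp: U_def S0_def T0_def)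
  then have "f S0 = shuffle_sign S0 T0 * x S0 * y T0" by (simp add: f_def)
  finally have "wedge x y U = shuffle_sign S0 T0 * x S0 * y T0" by simp
  moreover have "shuffle_sign S0 T0 \<noteq> (0::'a)" by (simp add: shuffle_sign_def)
  moreover have "x S0 \<noteq> 0" using lead_props(1)[OF x x0] by (simp add: S0_def)
  moreover have "y T0 \<noteq> 0" using lead_props(1)[OF y y0] by (simp add: T0_def)
  ultimately have "wedge x y U \<noteq> 0" by simp
  then show ?thesis by auto
qed

lemma sum_fun_apply': "(sum g A) t = (\<Sum>s\<in>A. g s t)"
  by (induction A rule: infinite_finite_induct) auto


lemma dim_le_lead:
  fixes K :: "(nat set \<Rightarrow> 'a::field) set"
  assumes sK: "module.subspace fscale K" and Kk: "K \<subseteq> ext_power n k"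
  shows "vector_space.dim fscale K \<le> card (lead ` (K - {0}))"
proof -
  interpret V: vector_space "fscale :: 'a \<Rightarrow> (nat set \<Rightarrow> 'a) \<Rightarrow> _" by (rule vector_space_fscale)
  define A where "A = lead ` (K - {0})"
  have finA: "finite A"
  proof (rule finite_subset[of _ "Pow {..<n}"])
    show "A \<subseteq> Pow {..<n}"
    proof
      fix S assume "S \<in> A"
      then obtain x where "x \<in> K" "x \<noteq> 0" "S = lead x" by (auto simp: A_def)
      then show "S \<in> Pow {..<n}" using Kk lead_props(2)[of x n k] by auto
    qed
  qed simp
  define r where "r = (\<lambda>x::nat set \<Rightarrow> 'a. \<lambda>S. if S \<in> A then x S else 0)"
  have lin: "Vector_Spaces.linear fscale fscale r"
    unfolding Vector_Spaces.linear_iff using vector_space_fscale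
    by (auto simp: r_def fscale_def fun_eq_iff)
  interpret L: Vector_Spaces.linear fscale fscale r by (rule lin)
  obtain Bs where Bs: "Bs \<subseteq> K" "V.independent Bs" "K \<subseteq> V.span Bs" "card Bs = V.dim K"
    using V.basis_exists by blast
  have spK: "V.span Bs \<subseteq> K" using V.span_minimal[OF Bs(1) sK] .
  have injK: "inj_on r K"
  proof (rule inj_onI)
    fix x y assume x: "x \<in> K" and y: "y \<in> K" and e: "r x = r y"
    show "x = y"
    proof (rule ccontr)
      assume "x \<noteq> y"
      then have z0: "x - y \<noteq> 0" by simp
      have zK: "x - y \<in> K" using V.subspace_diff[OF sK x y] .
      then have zE: "x - y \<in> ext_power n k" using Kk by blast
      have lA: "lead (x - y) \<in> A" using zK z0 by (auto simp: A_def)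
      have "(x - y) (lead (x - y)) \<noteq> 0" using lead_props(1)[OF zE z0] .
      moreover have "r x (lead (x - y)) = r y (lead (x - y))" using e by simp
      ultimately show False using lA by (simp add: r_def)
    qed
  qed
  have injS: "inj_on r (V.span Bs)" using inj_on_subset[OF injK spK] .
  have indep: "V.independent (r ` Bs)"
    using L.independent_injective_image[OF Bs(2) injS] .
  define W where "W = (\<lambda>S. \<lambda>T. if T = S then (1::'a) else 0) ` A"
  have finW: "finite W" using finA by (simp add: W_def)
  have inspan: "r ` Bs \<subseteq> V.span W"
  proof
    fix f assume "f \<in> r ` Bs"
    then obtain b where f: "f = r b" by blast
    have "f = (\<Sum>S\<in>A. fscale (f S) (\<lambda>T. if T = S then 1 else 0))"
      by (rule ext) (auto simp: sum_fun_apply' fscale_def f r_def finA if_distrib cong: if_cong)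
    also have "\<dots> \<in> V.span W"
      by (intro V.span_sum V.span_scale V.span_base) (auto simp: W_def)
    finally show "f \<in> V.span W" .
  qed
  have "card (r ` Bs) \<le> card W" using V.independent_span_bound[OF finW indep inspan] by simp
  also have "card W \<le> card A" unfolding W_def by (rule card_image_le[OF finA])
  finally have "card (r ` Bs) \<le> card A" .
  moreover have "card (r ` Bs) = card Bs" using inj_on_subset[OF injK Bs(1)] by (rule card_image)
  ultimately show ?thesis using Bs(4) by (simp add: A_def)
qed


theorem theorem1p7:
  fixes n k :: nat
    and K L :: "(nat set \<Rightarrow> 'a::field) set"
  assumes char: "(2::'a) \<noteq> 0"
    and kn: "2 * k \<le> n"
    and K_sub: "K \<subseteq> ext_power n k" and K_subspace: "module.subspace fscale K"
    and L_sub: "L \<subseteq> ext_power n k" and L_subspace: "module.subspace fscale L"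
    and K_nz: "K \<noteq> {0}" and L_nz: "L \<noteq> {0}"
    and cross: "\<forall>x\<in>K. \<forall>y\<in>L. wedge x y = 0"
  shows "vector_space.dim fscale K + vector_space.dim fscale L
           \<le> (n choose k) - ((n - k) choose k) + 1"
proof -
  interpret V: vector_space "fscale :: 'a \<Rightarrow> (nat set \<Rightarrow> 'a) \<Rightarrow> _" by (rule vector_space_fscale)
  define A where "A = lead ` (K - {0})"
  define B where "B = lead ` (L - {0})"
  have ks: "lead ` (M - {0}) \<subseteq> ksets n k" if "M \<subseteq> ext_power n k" for M :: "(nat set \<Rightarrow> 'a) set"
  proof
    fix S assume "S \<in> lead ` (M - {0})"
    then obtain x where "x \<in> M" "x \<noteq> 0" "S = lead x" by auto
    then show "S \<in> ksets n k" using that lead_props(2,3)[of x n k] by (auto simp: ksets_def)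
  qed
  have Ak: "A \<subseteq> ksets n k" unfolding A_def using ks[OF K_sub] .
  have Bk: "B \<subseteq> ksets n k" unfolding B_def using ks[OF L_sub] .
  have "0 \<in> K" using V.subspace_0[OF K_subspace] .
  then have Ane: "A \<noteq> {}" using K_nz by (auto simp: A_def)
  have "0 \<in> L" using V.subspace_0[OF L_subspace] .
  then have Bne: "B \<noteq> {}" using L_nz by (auto simp: B_def)
  have c: "crossi A B"
    unfolding crossi_def
  proof (intro ballI)
    fix S T assume "S \<in> A" "T \<in> B"
    then obtain x y where x: "x \<in> K" "x \<noteq> 0" "S = lead x" and y: "y \<in> L" "y \<noteq> 0" "T = lead y"
      by (auto simp: A_def B_def)
    show "S \<inter> T \<noteq> {}"
    proof
      assume "S \<inter> T = {}"
      then have "wedge x y \<noteq> 0"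
        using wedge_lead[of x n k y k] x y K_sub L_sub by blast
      then show False using cross x y by blast
    qed
  qed
  have "card A + card B \<le> (n choose k) - ((n - k) choose k) + 1"
    using HM[OF Ak Bk Ane Bne c kn] .
  moreover have "vector_space.dim fscale K \<le> card A"
    unfolding A_def using dim_le_lead[OF K_subspace K_sub] .
  moreover have "vector_space.dim fscale L \<le> card B"
    unfolding B_def using dim_le_lead[OF L_subspace L_sub] .
  ultimately show ?thesis by linarith
qed


end
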